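(* Let $G_i\leq\mathrm{Sym}(n_i)$ for $1\leq i\leq k$ and let $G=G_1\times\cdots\times G_k$ be their external direct product acting on $[n_1]\times\cdots\times[n_k]$ by $(x_1,\dots,x_k)^{(g_1,\dots,g_k)}=(x_1^{g_1},\dots,x_k^{g_k})$. Then \[\alpha(\Gamma_G)=\alpha(\Gamma_{G_1})\cdots\alpha(\Gamma_{G_k}).\]
   Context: For a permutation group $G$ acting on a set, the derangement graph $\Gamma_G$ has vertex set $G$, with $\sigma,\pi$ adjacent iff $\sigma\pi^{-1}$ has no fixed point. $\alpha(X)$ denotes the size of a largest independent set in a graph $X$. *)

theory Defs
  imports "HOL-Combinatorics.Permutations" "HOL-Library.FuncSet"
begin

definition perm_group :: "'a set \<Rightarrow> ('a \<Rightarrow> 'a) set \<Rightarrow> bool" where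
  "perm_group \<Omega> G \<longleftrightarrow> G \<subseteq> {f. f permutes \<Omega>} \<and> id \<in> G \<and>
     (\<forall>f\<in>G. \<forall>g\<in>G. f \<circ> g \<in> G) \<and> (\<forall>f\<in>G. inv f \<in> G)"

definition derangement :: "'a set \<Rightarrow> ('a \<Rightarrow> 'a) \<Rightarrow> bool" where
  "derangement \<Omega> f \<longleftrightarrow> (\<forall>x\<in>\<Omega>. f x \<noteq> x)"

text \<open>Adjacency in the derangement graph: sigma pi^-1 has no fixed point
  (right-action convention: x^(sigma pi^-1) = pi^-1 (sigma x)).\<close>
definition derangement_adj :: "'a set \<Rightarrow> ('a \<Rightarrow> 'a) \<Rightarrow> ('a \<Rightarrow> 'a) \<Rightarrow> bool" where
  "derangement_adj \<Omega> \<sigma> \<pi> \<longleftrightarrow> derangement \<Omega> (inv \<pi> \<circ> \<sigma>)"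

definition indep_set :: "'a set \<Rightarrow> ('a \<Rightarrow> 'a) set \<Rightarrow> ('a \<Rightarrow> 'a) set \<Rightarrow> bool" where
  "indep_set \<Omega> G S \<longleftrightarrow> S \<subseteq> G \<and>
     (\<forall>\<sigma>\<in>S. \<forall>\<pi>\<in>S. \<sigma> \<noteq> \<pi> \<longrightarrow> \<not> derangement_adj \<Omega> \<sigma> \<pi>)"

definition alpha_der :: "'a set \<Rightarrow> ('a \<Rightarrow> 'a) set \<Rightarrow> nat" where
  "alpha_der \<Omega> G = Max {card S | S. indep_set \<Omega> G S}"

definition prod_points :: "nat \<Rightarrow> (nat \<Rightarrow> nat) \<Rightarrow> (nat \<Rightarrow> nat) set" where
  "prod_points k n = PiE {..<k} (\<lambda>i. {..<n i})"

definition prod_perm :: "nat \<Rightarrow> (nat \<Rightarrow> nat) \<Rightarrow> (nat \<Rightarrow> nat \<Rightarrow> nat) \<Rightarrow> (nat \<Rightarrow> nat) \<Rightarrow> (nat \<Rightarrow> nat)" where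
  "prod_perm k n g x = (if x \<in> prod_points k n then restrict (\<lambda>i. g i (x i)) {..<k} else x)"

definition prod_group :: "nat \<Rightarrow> (nat \<Rightarrow> nat) \<Rightarrow> (nat \<Rightarrow> (nat \<Rightarrow> nat) set) \<Rightarrow> ((nat \<Rightarrow> nat) \<Rightarrow> (nat \<Rightarrow> nat)) set" where
  "prod_group k n G = prod_perm k n ` PiE {..<k} G"

end

theory Submission
  imports Defs
begin

lemma pp_in:
  assumes "x \<in> prod_points k n" shows "prod_perm k n g x = restrict (\<lambda>i. g i (x i)) {..<k}"
  using assms by (simp add: prod_perm_def)

lemma pp_cancel:
  assumes g: "\<forall>i<k. g i permutes {..<n i}"
    and fg: "\<forall>i<k. \<forall>y<n i. f i (g i y) = y"
  shows "prod_perm k n f (prod_perm k n g x) = x"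
proof (cases "x \<in> prod_points k n")
  case True
  have xm: "x \<in> PiE {..<k} (\<lambda>i. {..<n i})" using True by (simp add: prod_points_def)
  have inP: "restrict (\<lambda>i. g i (x i)) {..<k} \<in> prod_points k n"
    unfolding prod_points_def using xm g permutes_in_image by fastforce
  have "prod_perm k n f (prod_perm k n g x) = restrict (\<lambda>i. f i (g i (x i))) {..<k}"
    using True inP unfolding prod_perm_def by (auto intro!: restrict_ext)
  also have "\<dots> = restrict x {..<k}"
    using xm fg by (intro restrict_ext) auto
  also have "\<dots> = x" using xm by simp
  finally show ?thesis .
next
  case False thus ?thesis by (simp add: prod_perm_def)
qed

lemma pp_bij:
  assumes g: "\<forall>i<k. g i permutes {..<n i}"
  shows "bij (prod_perm k n g)"
proof (rule o_bij)
  have gi: "\<forall>i<k. (\<lambda>i. inv (g i)) i permutes {..<n i}" using g permutes_inv by blast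
  show "prod_perm k n (\<lambda>i. inv (g i)) \<circ> prod_perm k n g = id"
  proof (rule ext)
    fix x
    have c: "\<forall>i<k. \<forall>y<n i. inv (g i) (g i y) = y"
    proof (intro allI impI)
      fix i y assume "i < k"
      with g have "g i permutes {..<n i}" by blast
      thus "inv (g i) (g i y) = y" by (rule permutes_inverses(2))
    qed
    show "(prod_perm k n (\<lambda>i. inv (g i)) \<circ> prod_perm k n g) x = id x"
      using pp_cancel[OF g c] by simp
  qed
  show "prod_perm k n g \<circ> prod_perm k n (\<lambda>i. inv (g i)) = id"
  proof (rule ext)
    fix x
    have c: "\<forall>i<k. \<forall>y<n i. g i (inv (g i) y) = y"
    proof (intro allI impI)
      fix i y assume "i < k"
      with g have "g i permutes {..<n i}" by blast
      thus "g i (inv (g i) y) = y" by (rule permutes_inverses(1))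
    qed
    show "(prod_perm k n g \<circ> prod_perm k n (\<lambda>i. inv (g i))) x = id x"
      using pp_cancel[OF gi c] by simp
  qed
qed

lemma nonadj_bij:
  assumes "bij \<pi>"
  shows "\<not> derangement_adj \<Omega> \<sigma> \<pi> \<longleftrightarrow> (\<exists>x\<in>\<Omega>. \<sigma> x = \<pi> x)"
proof -
  have h: "\<And>x. inv \<pi> (\<sigma> x) = x \<longleftrightarrow> \<sigma> x = \<pi> x"
    using bij_inv_eq_iff[OF assms] by metis
  show ?thesis unfolding derangement_adj_def derangement_def by (simp add: h)
qed

lemma agree_iff:
  "(\<exists>x\<in>prod_points k n. prod_perm k n g x = prod_perm k n g' x) \<longleftrightarrow>
   (\<forall>i<k. \<exists>y<n i. g i y = g' i y)"
proof
  assume "\<exists>x\<in>prod_points k n. prod_perm k n g x = prod_perm k n g' x"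
  then obtain x where x: "x \<in> prod_points k n" "prod_perm k n g x = prod_perm k n g' x" by blast
  show "\<forall>i<k. \<exists>y<n i. g i y = g' i y"
  proof (intro allI impI)
    fix i assume i: "i < k"
    have "restrict (\<lambda>i. g i (x i)) {..<k} i = restrict (\<lambda>i. g' i (x i)) {..<k} i"
      using x by (simp add: pp_in)
    moreover have "x i < n i" using x i by (auto simp: prod_points_def)
    ultimately show "\<exists>y<n i. g i y = g' i y" using i by auto
  qed
next
  assume h: "\<forall>i<k. \<exists>y<n i. g i y = g' i y"
  define x where "x = restrict (\<lambda>i. SOME y. y < n i \<and> g i y = g' i y) {..<k}"
  have xi: "x i < n i \<and> g i (x i) = g' i (x i)" if i: "i < k" for i
  proof -
    have "\<exists>y. y < n i \<and> g i y = g' i y" using h i by blast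
    from someI_ex[OF this] show ?thesis using i by (simp add: x_def)
  qed
  have xP: "x \<in> prod_points k n" unfolding prod_points_def x_def using xi[unfolded x_def] by auto
  have "prod_perm k n g x = prod_perm k n g' x"
    using xP xi by (simp add: pp_in cong: restrict_cong)
  thus "\<exists>x\<in>prod_points k n. prod_perm k n g x = prod_perm k n g' x" using xP by blast
qed

lemma pp_inj:
  assumes n: "\<And>i. i < k \<Longrightarrow> n i \<ge> 1"
    and perm: "\<And>i g. i < k \<Longrightarrow> g \<in> G i \<Longrightarrow> g permutes {..<n i}"
  shows "inj_on (prod_perm k n) (PiE {..<k} G)"
proof (rule inj_onI)
  fix g g' assume g: "g \<in> PiE {..<k} G" and g': "g' \<in> PiE {..<k} G"
    and eq: "prod_perm k n g = prod_perm k n g'"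
  show "g = g'"
  proof (rule ext)
    fix i show "g i = g' i"
    proof (cases "i < k")
      case False
      hence "i \<notin> {..<k}" by simp
      thus ?thesis using PiE_arb[OF g] PiE_arb[OF g'] by metis
    next
      case True
      show ?thesis
      proof (rule ext)
        fix y show "g i y = g' i y"
        proof (cases "y < n i")
          case False
          have m: "g i \<in> G i" "g' i \<in> G i" using g g' True by (auto simp: PiE_iff)
          have "g i y = y" using permutes_not_in[OF perm[OF True m(1)]] False by simp
          moreover have "g' i y = y" using permutes_not_in[OF perm[OF True m(2)]] False by simp
          ultimately show ?thesis by simp
        next
          case yl: True
          define x where "x = restrict (\<lambda>j. if j = i then y else 0) {..<k}"
          have "\<forall>j\<in>{..<k}. (if j = i then y else 0) \<in> {..<n j}"
          proof
            fix j assume "j \<in> {..<k}"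
            with n have "n j \<ge> 1" by simp
            thus "(if j = i then y else 0) \<in> {..<n j}" using yl by auto
          qed
          hence xP: "x \<in> prod_points k n" unfolding prod_points_def x_def
            by (simp only: restrict_PiE_iff)
          have xi: "x i = y" using True by (simp add: x_def)
          have "prod_perm k n g x i = prod_perm k n g' x i" using eq by simp
          moreover have "prod_perm k n g x i = g i y" using xP True xi by (simp add: pp_in)
          moreover have "prod_perm k n g' x i = g' i y" using xP True xi by (simp add: pp_in)
          ultimately show ?thesis by simp
        qed
      qed
    qed
  qed
qed

lemma alpha_ge:
  assumes "finite G" "indep_set \<Omega> G S"
  shows "card S \<le> alpha_der \<Omega> G"
proof -
  have "{card S | S. indep_set \<Omega> G S} \<subseteq> {..card G}"
  proof
    fix c assume "c \<in> {card S | S. indep_set \<Omega> G S}"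
    then obtain S where S: "c = card S" "indep_set \<Omega> G S" by blast
    hence "S \<subseteq> G" by (simp add: indep_set_def)
    thus "c \<in> {..card G}" using card_mono[OF assms(1)] S(1) by simp
  qed
  hence "finite {card S | S. indep_set \<Omega> G S}" by (rule finite_subset) simp
  moreover have "card S \<in> {card S | S. indep_set \<Omega> G S}" using assms(2) by blast
  ultimately show ?thesis unfolding alpha_der_def by (rule Max_ge)
qed

lemma alpha_att:
  assumes "finite G"
  shows "\<exists>S. indep_set \<Omega> G S \<and> card S = alpha_der \<Omega> G"
proof -
  have "{card S | S. indep_set \<Omega> G S} \<subseteq> {..card G}"
  proof
    fix c assume "c \<in> {card S | S. indep_set \<Omega> G S}"
    then obtain S where S: "c = card S" "indep_set \<Omega> G S" by blast
    hence "S \<subseteq> G" by (simp add: indep_set_def)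
    thus "c \<in> {..card G}" using card_mono[OF assms(1)] S(1) by simp
  qed
  hence f: "finite {card S | S. indep_set \<Omega> G S}" by (rule finite_subset) simp
  have "indep_set \<Omega> G {}" by (simp add: indep_set_def)
  hence "{card S | S. indep_set \<Omega> G S} \<noteq> {}" by blast
  from Max_in[OF f this] obtain S where
    "Max {card S | S. indep_set \<Omega> G S} = card S" "indep_set \<Omega> G S" by blast
  thus ?thesis unfolding alpha_der_def by metis
qed

theorem lemma14:
  fixes k :: nat and n :: "nat \<Rightarrow> nat" and G :: "nat \<Rightarrow> (nat \<Rightarrow> nat) set"
  assumes "\<And>i. i < k \<Longrightarrow> n i \<ge> 1"
      and "\<And>i. i < k \<Longrightarrow> perm_group {..<n i} (G i)"
  shows "alpha_der (prod_points k n) (prod_group k n G)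
           = (\<Prod>i<k. alpha_der {..<n i} (G i))"
proof -
  note n = assms(1)
  have perm: "g permutes {..<n i}" if i: "i < k" and g: "g \<in> G i" for i g
  proof -
    from assms(2)[OF i] have "G i \<subseteq> {f. f permutes {..<n i}}" by (simp add: perm_group_def)
    with g show ?thesis by blast
  qed
  have finG: "finite (G i)" if i: "i < k" for i
  proof -
    have "G i \<subseteq> {p. p permutes {..<n i}}" using assms(2)[OF i] unfolding perm_group_def by blast
    thus ?thesis by (rule finite_subset) (simp add: finite_permutations)
  qed
  have finP: "finite (prod_group k n G)" unfolding prod_group_def
    by (intro finite_imageI finite_PiE) (simp_all add: finG)
  have Pperm: "\<forall>i<k. g i permutes {..<n i}" if g: "g \<in> PiE {..<k} G" for g
  proof (intro allI impI)
    fix i assume i: "i < k"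
    have "g i \<in> G i" using PiE_mem[OF g] i by simp
    thus "g i permutes {..<n i}" by (rule perm[OF i])
  qed
  have nonadj: "\<not> derangement_adj (prod_points k n) (prod_perm k n g) (prod_perm k n g') \<longleftrightarrow>
      (\<forall>i<k. \<exists>y<n i. g i y = g' i y)" if "g \<in> PiE {..<k} G" "g' \<in> PiE {..<k} G" for g g'
  proof -
    have "bij (prod_perm k n g')" using pp_bij[OF Pperm[OF that(2)]] .
    show ?thesis by (simp only: nonadj_bij[OF \<open>bij (prod_perm k n g')\<close>] agree_iff)
  qed
  have inj: "inj_on (prod_perm k n) (PiE {..<k} G)" by (rule pp_inj[OF n perm])
  let ?A = "\<lambda>i. alpha_der {..<n i} (G i)"
  show ?thesis
  proof (rule antisym)
    obtain T where T: "indep_set (prod_points k n) (prod_group k n G) T"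
      and cT: "card T = alpha_der (prod_points k n) (prod_group k n G)"
      using alpha_att[OF finP] by blast
    define T' where "T' = {g \<in> PiE {..<k} G. prod_perm k n g \<in> T}"
    have TT': "T = prod_perm k n ` T'" using T
      unfolding T'_def indep_set_def prod_group_def by auto
    have cT': "card T = card T'" unfolding TT' using inj
      by (intro card_image) (auto simp: T'_def intro: inj_on_subset)
    define S where "S = (\<lambda>i. (\<lambda>g. g i) ` T')"
    have Sind: "indep_set {..<n i} (G i) (S i)" if i: "i < k" for i
    proof -
      have "S i \<subseteq> G i" using i by (auto simp: S_def T'_def PiE_iff)
      moreover have "\<not> derangement_adj {..<n i} \<sigma> \<pi>"
        if s: "\<sigma> \<in> S i" "\<pi> \<in> S i" "\<sigma> \<noteq> \<pi>" for \<sigma> \<pi>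
      proof -
        obtain g g' where gg: "g \<in> T'" "g' \<in> T'" "\<sigma> = g i" "\<pi> = g' i"
          using s by (auto simp: S_def)
        have gP: "g \<in> PiE {..<k} G" "g' \<in> PiE {..<k} G" using gg by (auto simp: T'_def)
        have "prod_perm k n g \<noteq> prod_perm k n g'"
        proof
          assume "prod_perm k n g = prod_perm k n g'"
          hence "g = g'" using inj_onD[OF inj _ gP] by blast
          thus False using s(3) gg(3,4) by simp
        qed
        hence "\<not> derangement_adj (prod_points k n) (prod_perm k n g) (prod_perm k n g')"
          using T gg unfolding indep_set_def T'_def by auto
        then obtain y where "y < n i" "g i y = g' i y" using nonadj[OF gP] i by blast
        hence ex: "\<exists>x\<in>{..<n i}. \<sigma> x = \<pi> x" using gg(3,4) by auto
        have "g' i \<in> G i" using PiE_mem[OF gP(2)] i by simp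
        hence "bij \<pi>" using gg(4) permutes_bij[OF perm[OF i]] by simp
        from nonadj_bij[OF this] ex show ?thesis by blast
      qed
      ultimately show ?thesis unfolding indep_set_def by blast
    qed
    have "T' \<subseteq> PiE {..<k} S"
    proof
      fix g assume g: "g \<in> T'"
      hence gP: "g \<in> PiE {..<k} G" by (simp add: T'_def)
      show "g \<in> PiE {..<k} S"
      proof (rule PiE_I)
        fix i assume "i \<in> {..<k}"
        show "g i \<in> S i" using g by (simp add: S_def)
      next
        fix i assume "i \<notin> {..<k}"
        thus "g i = undefined" by (rule PiE_arb[OF gP])
      qed
    qed
    hence "card T' \<le> card (PiE {..<k} S)"
      using finG by (intro card_mono finite_PiE) (auto simp: S_def T'_def intro: finite_subset)
    also have "\<dots> = (\<Prod>i<k. card (S i))" by (simp add: card_PiE)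
    also have "\<dots> \<le> (\<Prod>i<k. ?A i)"
    proof (rule prod_mono)
      fix i assume "i \<in> {..<k}"
      hence i: "i < k" by simp
      show "0 \<le> card (S i) \<and> card (S i) \<le> ?A i" using alpha_ge[OF finG[OF i] Sind[OF i]] by simp
    qed
    finally show "alpha_der (prod_points k n) (prod_group k n G) \<le> (\<Prod>i<k. ?A i)"
      using cT cT' by simp
  next
    define S where "S = (\<lambda>i. SOME S. indep_set {..<n i} (G i) S \<and> card S = ?A i)"
    have S: "indep_set {..<n i} (G i) (S i) \<and> card (S i) = ?A i" if i: "i < k" for i
      unfolding S_def by (rule someI_ex[OF alpha_att[OF finG[OF i]]])
    define T where "T = prod_perm k n ` PiE {..<k} S"
    have sub: "PiE {..<k} S \<subseteq> PiE {..<k} G"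
    proof (rule PiE_mono)
      fix i assume "i \<in> {..<k}"
      hence "i < k" by simp
      from S[OF this] show "S i \<subseteq> G i" by (simp add: indep_set_def)
    qed
    have "indep_set (prod_points k n) (prod_group k n G) T"
      unfolding indep_set_def
    proof (intro conjI ballI impI)
      show "T \<subseteq> prod_group k n G" using sub by (auto simp: T_def prod_group_def)
      fix a b assume ab: "a \<in> T" "b \<in> T" "a \<noteq> b"
      then obtain g g' where gg: "g \<in> PiE {..<k} S" "g' \<in> PiE {..<k} S"
        "a = prod_perm k n g" "b = prod_perm k n g'" by (auto simp: T_def)
      have "\<forall>i<k. \<exists>y<n i. g i y = g' i y"
      proof (intro allI impI)
        fix i assume i: "i < k"
        show "\<exists>y<n i. g i y = g' i y"
        proof (cases "g i = g' i")
          case True thus ?thesis using n[OF i] by (intro exI[of _ 0]) auto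
        next
          case False
          have mem: "g i \<in> S i" "g' i \<in> S i" using gg i by (auto simp: PiE_iff)
          hence na: "\<not> derangement_adj {..<n i} (g i) (g' i)" using S[OF i] False
            unfolding indep_set_def by blast
          have "g' i \<in> G i" using mem(2) S[OF i] by (auto simp: indep_set_def)
          hence "bij (g' i)" by (rule permutes_bij[OF perm[OF i]])
          from nonadj_bij[OF this] na have "\<exists>x\<in>{..<n i}. g i x = g' i x" by blast
          thus ?thesis by auto
        qed
      qed
      thus "\<not> derangement_adj (prod_points k n) a b"
        using nonadj[OF subsetD[OF sub gg(1)] subsetD[OF sub gg(2)]] gg(3,4) by simp
    qed
    hence "card T \<le> alpha_der (prod_points k n) (prod_group k n G)"
      by (rule alpha_ge[OF finP])
    moreover have "card T = card (PiE {..<k} S)" unfolding T_def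
      by (rule card_image[OF inj_on_subset[OF inj sub]])
    moreover have "card (PiE {..<k} S) = (\<Prod>i<k. ?A i)"
      unfolding card_PiE[OF finite_lessThan] using S by (intro prod.cong) auto
    ultimately show "(\<Prod>i<k. ?A i) \<le> alpha_der (prod_points k n) (prod_group k n G)" by simp
  qed
qed

end
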